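(* Let $s_\beta$ be the base phi sum of digits function, and let $I_\beta$, $C_\beta$, $D_\beta$ (indexed from $1$) be the increasing enumerations of the points of increase, constancy, and decrease of $s_\beta$, respectively. Then: (i) $I_\beta(1)=0$, and $\Delta I_\beta$ is the fixed point of the morphism on $\{1,2,4\}$ given by $1\mapsto12$, $2\mapsto4$, $4\mapsto1244$; (ii) $C_\beta(1)=2$, and $\Delta C_\beta$ is the image under the letter-to-letter projection $1\mapsto1$, $2\mapsto2$, $3\mapsto3$, $3'\mapsto3$, $4\mapsto4$ of the fixed point (starting with $2$) of the morphism on $\{1,2,3,3',4\}$ given by $1\mapsto43$, $2\mapsto21$, $3\mapsto21$, $3'\mapsto13'43$, $4\mapsto13'4$; (iii) $D_\beta(1)=6$, and $\Delta D_\beta$ is the shift by one (i.e. the word obtained by deleting the first letter) of the fixed point of the morphism on $\{2,4,5,7\}$ given by $2\mapsto542$, $4\mapsto542$, $5\mapsto7$, $7\mapsto7542$.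
   Context: Let $\varphi=(1+\sqrt5)/2$. Every natural number $N$ can be written uniquely (ignoring leading and trailing zeros) as a finite sum $N=\sum_i d_i\varphi^i$ over integers $i$ (possibly negative), with $d_i\in\{0,1\}$ and no two consecutive digits both equal to $1$; $s_\beta(N)$ is the number of digits $1$, with $s_\beta(0)=0$. $N\ge0$ is a point of increase, constancy, or decrease of $s_\beta$ according as $s_\beta(N+1)-s_\beta(N)$ is $>0$, $=0$, or $<0$. For a sequence $V=(V(n))_{n\ge1}$, $\Delta V=(V(n+1)-V(n))_{n\ge1}$, viewed as an infinite word. The fixed point of a morphism $\mu$ starting with a letter $a$ (where $\mu(a)$ begins with $a$ and has length $\ge2$) is $\lim_n\mu^n(a)$; in (i) it starts with $1$, in (ii) with $2$, and in (iii) with $7$. *)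

theory Defs
  imports Complex_Main "HOL-Library.Infinite_Set"
begin

definition phi :: real where "phi = (1 + sqrt 5) / 2"

text \<open>A base-phi representation of N: the finite set S of positions i (integers) carrying
  digit 1, with no two consecutive positions, and N = sum of phi^i over S.\<close>
definition is_phi_rep :: "nat \<Rightarrow> int set \<Rightarrow> bool" where
  "is_phi_rep N S \<longleftrightarrow> finite S \<and> (\<forall>i\<in>S. i + 1 \<notin> S) \<and> real N = (\<Sum>i\<in>S. phi powi i)"

definition s_beta :: "nat \<Rightarrow> nat" where
  "s_beta N = card (THE S. is_phi_rep N S)"

definition incr_pts :: "nat set" where "incr_pts = {N. s_beta (N + 1) > s_beta N}"
definition const_pts :: "nat set" where "const_pts = {N. s_beta (N + 1) = s_beta N}"
definition decr_pts :: "nat set" where "decr_pts = {N. s_beta (N + 1) < s_beta N}"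

text \<open>Increasing enumerations, indexed from 1.\<close>
definition I_beta :: "nat \<Rightarrow> nat" where "I_beta n = enumerate incr_pts (n - 1)"
definition C_beta :: "nat \<Rightarrow> nat" where "C_beta n = enumerate const_pts (n - 1)"
definition D_beta :: "nat \<Rightarrow> nat" where "D_beta n = enumerate decr_pts (n - 1)"

text \<open>Morphisms on letters (encoded as naturals), their action on words, and fixed points
  lim_n mu^n(a), as infinite words indexed from 0.\<close>
definition morph_iter :: "(nat \<Rightarrow> nat list) \<Rightarrow> nat \<Rightarrow> nat list \<Rightarrow> nat list" where
  "morph_iter mu n w = ((\<lambda>v. concat (map mu v)) ^^ n) w"

definition fixpt :: "(nat \<Rightarrow> nat list) \<Rightarrow> nat \<Rightarrow> nat \<Rightarrow> nat" where
  "fixpt mu a k = morph_iter mu (LEAST n. k < length (morph_iter mu n [a])) [a] ! k"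

definition mu_I :: "nat \<Rightarrow> nat list" where
  "mu_I x = (if x = 1 then [1,2] else if x = 2 then [4] else if x = 4 then [1,2,4,4] else [])"

text \<open>(ii): letter 3' is encoded as 5. 1->43, 2->21, 3->21, 3'->13'43, 4->13'4.\<close>
definition mu_C :: "nat \<Rightarrow> nat list" where
  "mu_C x = (if x = 1 then [4,3] else if x = 2 then [2,1] else if x = 3 then [2,1]
     else if x = 5 then [1,5,4,3] else if x = 4 then [1,5,4] else [])"

definition proj_C :: "nat \<Rightarrow> nat" where
  "proj_C x = (if x = 5 then 3 else x)"

definition mu_D :: "nat \<Rightarrow> nat list" where
  "mu_D x = (if x = 2 then [5,4,2] else if x = 4 then [5,4,2] else if x = 5 then [7]
     else if x = 7 then [7,5,4,2] else [])"

end

theory Submission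
  imports Defs
begin


lemma sqrt5_sq: "sqrt 5 * sqrt 5 = (5::real)" by simp

lemma phi_gt1: "phi > 1"
proof -
  have "sqrt 5 > (1::real)" by (simp add: real_less_rsqrt)
  thus ?thesis unfolding phi_def by simp
qed

lemma phi_pos: "phi > 0" using phi_gt1 by simp
lemma phi_ne0: "phi \<noteq> 0" using phi_gt1 by simp

lemma phi_sq: "phi * phi = phi + 1"
  unfolding phi_def by (simp add: field_simps sqrt5_sq) 

lemma phi_powi_rec: "phi powi (i+1) = phi powi i + phi powi (i - 1)"
proof -
  have "phi powi (i+1) = phi powi (i - 1) * phi powi 2"
    using power_int_add[of phi "i-1" 2] phi_ne0 by (simp add: add.commute)
  also have "phi powi 2 = phi * phi" by (simp add: power2_eq_square)
  also have "phi powi (i - 1) * (phi * phi) = phi powi (i-1) * phi + phi powi (i-1)"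
    by (simp add: phi_sq algebra_simps)
  also have "phi powi (i-1) * phi = phi powi i"
    using power_int_add_1[of phi "i-1"] phi_ne0 by simp
  finally show ?thesis .
qed

lemma phi_powi_pos: "phi powi i > 0" using phi_pos by simp

fun luc :: "nat \<Rightarrow> nat" where
  "luc 0 = 2" | "luc (Suc 0) = 1" | "luc (Suc (Suc n)) = luc n + luc (Suc n)"

definition psi :: real where "psi = 1 - phi"

lemma psi_sq: "psi * psi = psi + 1"
  unfolding psi_def using phi_sq by (simp add: algebra_simps)

lemma luc_binet: "real (luc k) = phi ^ k + psi ^ k"
proof (induction k rule: luc.induct)
  case 1 then show ?case by (simp add: psi_def)
next
  case 2 then show ?case by (simp add: psi_def)
next
  case (3 n)
  have "phi ^ Suc (Suc n) = phi^n * (phi*phi)" by (simp add: algebra_simps)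
  moreover have "psi ^ Suc (Suc n) = psi^n * (psi*psi)" by (simp add: algebra_simps)
  ultimately show ?case using 3 by (simp add: phi_sq psi_sq algebra_simps)
qed

lemma psi_eq: "psi = - inverse phi"
proof -
  have "phi * psi = -1" unfolding psi_def using phi_sq by (simp add: algebra_simps)
  thus ?thesis using phi_ne0 by (simp add: field_simps)
qed

lemma luc_even: "real (luc (2*n)) = phi powi (2*int n) + phi powi (-(2*int n))"
proof -
  have "psi ^ (2*n) = inverse phi ^ (2*n)" unfolding psi_eq by (simp add: power_mult)
  moreover have "phi powi (-(2*int n)) = inverse phi ^ (2*n)"
    by (metis power_int_minus power_int_of_nat power_inverse of_nat_mult of_nat_numeral)
  moreover have "phi powi (2*int n) = phi ^ (2*n)"
    by (metis power_int_of_nat of_nat_mult of_nat_numeral)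
  ultimately show ?thesis using luc_binet by simp
qed

lemma luc_odd: "real (luc (2*n+1)) = phi powi (2*int n+1) - phi powi (-(2*int n+1))"
proof -
  have "psi ^ (2*n+1) = - (inverse phi ^ (2*n+1))" unfolding psi_eq
    by (simp add: power_mult)
  moreover have "phi powi (-(2*int n+1)) = inverse phi ^ (2*n+1)"
    by (metis power_int_minus power_int_of_nat power_inverse of_nat_Suc of_nat_mult of_nat_numeral Suc_eq_plus1 add.commute)
  moreover have "phi powi (2*int n+1) = phi ^ (2*n+1)"
    by (metis power_int_of_nat of_nat_mult of_nat_numeral of_nat_Suc Suc_eq_plus1 add.commute)
  ultimately show ?thesis using luc_binet by simp
qed

definition noncons :: "int set \<Rightarrow> bool" where "noncons S \<longleftrightarrow> (\<forall>i\<in>S. i+1 \<notin> S)"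

lemma sum_bound:
  "finite U \<Longrightarrow> noncons U \<Longrightarrow> (\<forall>i\<in>U. i \<le> b) \<Longrightarrow> (\<Sum>i\<in>U. phi powi i) < phi powi (b+1)"
proof (induction "card U" arbitrary: U b rule: less_induct)
  case less
  show ?case
  proof (cases "U = {}")
    case True then show ?thesis using phi_powi_pos by simp
  next
    case False
    define u where "u = Max U"
    have uU: "u \<in> U" using False less.prems(1) u_def by simp
    have ub: "u \<le> b" using uU less.prems(3) by simp
    define U' where "U' = U - {u}"
    have fin': "finite U'" using less.prems(1) U'_def by simp
    have card': "card U' < card U" using uU less.prems(1) U'_def by (metis card_Diff1_less)
    have nc': "noncons U'" using less.prems(2) unfolding noncons_def U'_def by auto
    have le': "\<forall>i\<in>U'. i \<le> u - 2"
    proof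
      fix i assume i: "i \<in> U'"
      hence "i \<le> u" "i \<noteq> u" using less.prems(1) u_def U'_def by auto
      moreover have "i + 1 \<noteq> u" using i uU less.prems(2) unfolding noncons_def U'_def by auto
      ultimately show "i \<le> u - 2" by simp
    qed
    have IH: "(\<Sum>i\<in>U'. phi powi i) < phi powi (u - 2 + 1)"
      using less.hyps[OF card' fin' nc' le'] .
    have "(\<Sum>i\<in>U. phi powi i) = phi powi u + (\<Sum>i\<in>U'. phi powi i)"
      using uU less.prems(1) U'_def by (simp add: sum.remove)
    also have "\<dots> < phi powi u + phi powi (u - 1)" using IH by simp
    also have "\<dots> = phi powi (u+1)" using phi_powi_rec[of u] by simp
    also have "\<dots> \<le> phi powi (b+1)" using ub phi_gt1 by (intro power_int_increasing) auto
    finally show ?thesis .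
  qed
qed

lemma rep_unique_aux:
  assumes fS: "finite S" and fT: "finite T" and nT: "noncons T"
    and a: "a \<in> S" "a \<notin> T" and lt: "\<forall>x\<in>T - S. x < a"
  shows "(\<Sum>i\<in>T - S. phi powi i) < (\<Sum>i\<in>S - T. phi powi i)"
proof -
  have "(\<Sum>i\<in>T - S. phi powi i) < phi powi ((a - 1) + 1)"
    using lt fT nT by (intro sum_bound) (auto simp: noncons_def)
  also have "\<dots> = phi powi a" by simp
  also have "\<dots> \<le> (\<Sum>i\<in>S - T. phi powi i)"
    using a fS phi_powi_pos by (intro member_le_sum) (auto intro: less_imp_le)
  finally show ?thesis .
qed

lemma rep_unique:
  assumes fS: "finite S" and fT: "finite T" and nS: "noncons S" and nT: "noncons T"
    and eq: "(\<Sum>i\<in>S. phi powi i) = (\<Sum>i\<in>T. phi powi i)"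
  shows "S = T"
proof (rule ccontr)
  assume ne: "S \<noteq> T"
  define D where "D = (S - T) \<union> (T - S)"
  have fD: "finite D" using fS fT D_def by simp
  have Dne: "D \<noteq> {}" using ne D_def by auto
  define a where "a = Max D"
  have aD: "a \<in> D" using fD Dne a_def by simp
  have amax: "\<forall>x\<in>D. x \<le> a" using fD a_def by simp
  have sS: "(\<Sum>i\<in>S. phi powi i) = (\<Sum>i\<in>S \<inter> T. phi powi i) + (\<Sum>i\<in>S - T. phi powi i)"
    using fS by (rule sum.Int_Diff)
  have sT: "(\<Sum>i\<in>T. phi powi i) = (\<Sum>i\<in>S \<inter> T. phi powi i) + (\<Sum>i\<in>T - S. phi powi i)"
    using fT sum.Int_Diff[OF fT, of _ S] by (simp add: Int_commute)
  have eq2: "(\<Sum>i\<in>S - T. phi powi i) = (\<Sum>i\<in>T - S. phi powi i)" using eq sS sT by simp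
  show False
  proof (cases "a \<in> S")
    case True
    hence "a \<notin> T" using aD D_def by auto
    moreover have "\<forall>x\<in>T - S. x < a"
    proof
      fix x assume x: "x \<in> T - S"
      hence "x \<in> D" "x \<noteq> a" using D_def True by auto
      thus "x < a" using amax by (simp add: order_less_le)
    qed
    ultimately show False using rep_unique_aux[OF fS fT nT True] eq2 by simp
  next
    case False
    hence "a \<in> T" using aD D_def by auto
    moreover have "\<forall>x\<in>S - T. x < a"
    proof
      fix x assume x: "x \<in> S - T"
      hence "x \<in> D" "x \<noteq> a" using D_def False \<open>a \<in> T\<close> by auto
      thus "x < a" using amax by (simp add: order_less_le)
    qed
    ultimately show False using rep_unique_aux[OF fT fS nS \<open>a \<in> T\<close> False] eq2 by simp
  qed
qed

lemma is_phi_rep_alt: "is_phi_rep N S \<longleftrightarrow> finite S \<and> noncons S \<and> real N = (\<Sum>i\<in>S. phi powi i)"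
  unfolding is_phi_rep_def noncons_def by simp

lemma rep_unique': "is_phi_rep N S \<Longrightarrow> is_phi_rep N T \<Longrightarrow> S = T"
  unfolding is_phi_rep_alt using rep_unique by metis

lemma luc_pos: "luc n \<ge> 1"
  by (induction n rule: luc.induct) auto

lemma luc_step: "luc (Suc (Suc n)) > luc (Suc n)"
  using luc_pos[of n] by simp

lemma luc_strict: "1 \<le> i \<Longrightarrow> i < j \<Longrightarrow> luc i < luc j"
proof (induction j)
  case 0 then show ?case by simp
next
  case (Suc j)
  show ?case
  proof (cases "i = j")
    case True
    then obtain k where "j = Suc k" using Suc.prems by (cases j) auto
    then show ?thesis using True luc_step[of k] by simp
  next
    case False
    hence "i < j" using Suc.prems by simp
    hence "luc i < luc j" using Suc by simp
    moreover obtain k where "j = Suc k" using \<open>i < j\<close> Suc.prems by (cases j) auto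
    ultimately show ?thesis using luc_step[of k] by simp
  qed
qed

lemma luc_mono: "1 \<le> i \<Longrightarrow> i \<le> j \<Longrightarrow> luc i \<le> luc j"
  using luc_strict[of i j] by (cases "i = j") auto

lemma luc_ge: "luc n \<ge> n"
proof (induction n rule: luc.induct)
  case (3 n) then show ?case using luc_pos[of n] by simp
qed auto

definition cc :: "nat \<Rightarrow> nat" where "cc m = (LEAST k. m \<le> luc (2*k+1))"

lemma cc_le: "m \<le> luc (2*k+1) \<Longrightarrow> cc m \<le> k"
  unfolding cc_def by (rule Least_le)

lemma cc_eq: assumes "m \<le> luc (2*k+1)" and "k = 0 \<or> luc (2*k-1) < m" shows "cc m = k"
  unfolding cc_def
proof (rule Least_equality)
  show "m \<le> luc (2*k+1)" by fact
  fix j assume j: "m \<le> luc (2*j+1)"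
  show "k \<le> j"
  proof (rule ccontr)
    assume "\<not> k \<le> j"
    hence "2*j+1 \<le> 2*k-1" "k \<noteq> 0" by auto
    hence "luc (2*j+1) \<le> luc (2*k-1)" by (intro luc_mono) auto
    thus False using j assms(2) \<open>k \<noteq> 0\<close> by simp
  qed
qed

definition Inv :: "nat \<Rightarrow> int set \<Rightarrow> bool" where
  "Inv N S \<longleftrightarrow> is_phi_rep N S \<and> (\<forall>i\<in>S. -2 * int (cc N) \<le> i) \<and> (N \<ge> 1 \<longrightarrow> -2 * int (cc N) \<in> S)"

lemma elem_le: "is_phi_rep N S \<Longrightarrow> i \<in> S \<Longrightarrow> phi powi i \<le> real N"
  unfolding is_phi_rep_def using phi_powi_pos
  by (metis less_imp_le member_le_sum)

lemma top_bound: "is_phi_rep N S \<Longrightarrow> i \<in> S \<Longrightarrow> real N < phi powi k \<Longrightarrow> i < k"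
proof (rule ccontr)
  assume a: "is_phi_rep N S" "i \<in> S" "real N < phi powi k" "\<not> i < k"
  hence "phi powi k \<le> phi powi i" using phi_gt1 by (intro power_int_increasing) auto
  thus False using elem_le[OF a(1,2)] a(3) by simp
qed

lemma luc_odd_lt: "real (luc (2*n+1)) < phi powi (2*int n + 1)"
  using luc_odd[of n] phi_powi_pos[of "-(2*int n+1)"] by simp

lemma luc_even_lt: "n \<ge> 1 \<Longrightarrow> real (luc (2*n)) - 1 < phi powi (2*int n)"
proof -
  assume "n \<ge> 1"
  hence "phi powi (-(2*int n)) < phi powi 0" using phi_gt1 by (intro power_int_strict_increasing) auto
  thus ?thesis using luc_even[of n] by simp
qed

lemma R1:
  assumes n: "n \<ge> 1" and I: "Inv m S" and mb: "m \<le> luc (2*n-1)"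
  shows "Inv (luc (2*n) + m) (insert (2*int n) (insert (-(2*int n)) S))
         \<and> card (insert (2*int n) (insert (-(2*int n)) S)) = card S + 2"
proof -
  obtain n' where n': "n = n' + 1" using n by (cases n) auto
  have rep: "is_phi_rep m S" using I Inv_def by simp
  have fS: "finite S" using rep is_phi_rep_def by simp
  have hi: "\<forall>i\<in>S. i \<le> 2*int n - 2"
  proof
    fix i assume "i \<in> S"
    moreover have "real m < phi powi (2*int n' + 1)"
      using mb luc_odd_lt[of n'] n' by (simp add: algebra_simps)
    ultimately have "i < 2*int n' + 1" using top_bound rep by blast
    thus "i \<le> 2*int n - 2" using n' by simp
  qed
  have ccm: "cc m \<le> n'" using mb n' by (intro cc_le) (simp add: algebra_simps)
  have lo: "\<forall>i\<in>S. -(2*int n) + 2 \<le> i"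
  proof
    fix i assume "i \<in> S"
    hence "-2 * int (cc m) \<le> i" using I Inv_def by simp
    thus "-(2*int n) + 2 \<le> i" using ccm n' by simp
  qed
  have ccN: "cc (luc (2*n) + m) = n"
  proof (rule cc_eq)
    have "luc (2*n+1) = luc (2*n'+1) + luc (2*n)" using n' by simp
    thus "luc (2*n) + m \<le> luc (2*n+1)" using mb n' by (simp add: algebra_simps)
    have "luc (2*n-1) < luc (2*n)" using n by (intro luc_strict) auto
    thus "n = 0 \<or> luc (2*n-1) < luc (2*n) + m" by simp
  qed
  have nin1: "2*int n \<notin> S" using hi by fastforce
  have nin2: "-(2*int n) \<notin> S" using lo by fastforce
  have ne: "2*int n \<noteq> -(2*int n)" using n by simp
  let ?T = "insert (2*int n) (insert (-(2*int n)) S)"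
  have "finite ?T" using fS by simp
  moreover have "\<forall>i\<in>?T. i + 1 \<notin> ?T"
  proof
    fix i assume i: "i \<in> ?T"
    have "i + 1 \<notin> S" if "i \<in> S" using that rep unfolding is_phi_rep_def by blast
    moreover have "i + 1 \<notin> S" if "i = 2*int n" using that hi by fastforce
    moreover have "i + 1 \<notin> S" if "i = -(2*int n)" using that lo by fastforce
    moreover have "i + 1 \<noteq> 2*int n" if "i \<in> S" using that hi by fastforce
    moreover have "i + 1 \<noteq> -(2*int n)" if "i \<in> S" using that lo by fastforce
    moreover have "i + 1 \<noteq> 2*int n \<and> i + 1 \<noteq> -(2*int n)" if "i = 2*int n \<or> i = -(2*int n)"
      using that n by presburger
    ultimately show "i + 1 \<notin> ?T" using i by auto
  qed
  moreover have "real (luc (2*n) + m) = (\<Sum>i\<in>?T. phi powi i)"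
    using fS nin1 nin2 ne rep luc_even[of n] unfolding is_phi_rep_def by simp
  ultimately have "is_phi_rep (luc (2*n) + m) ?T" unfolding is_phi_rep_def by blast
  moreover have "\<forall>i\<in>?T. -2 * int (cc (luc (2*n) + m)) \<le> i" using ccN lo n by fastforce
  moreover have "-2 * int (cc (luc (2*n) + m)) \<in> ?T" using ccN by simp
  moreover have "card ?T = card S + 2" using fS nin1 nin2 ne by simp
  ultimately show ?thesis unfolding Inv_def by simp
qed

lemma telescope:
  "c \<le> n \<Longrightarrow> (\<Sum>i\<in>{c..<n}. phi powi (-(2*int i+1))) = phi powi (-(2*int c)) - phi powi (-(2*int n))"
proof (induction n)
  case 0 then show ?case by simp
next
  case (Suc n)
  show ?case
  proof (cases "c = Suc n")
    case True then show ?thesis by simp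
  next
    case False
    hence cn: "c \<le> n" using Suc.prems by simp
    have "(\<Sum>i\<in>{c..<Suc n}. phi powi (-(2*int i+1))) = (\<Sum>i\<in>{c..<n}. phi powi (-(2*int i+1))) + phi powi (-(2*int n+1))"
      using cn by simp
    also have "\<dots> = phi powi (-(2*int c)) - phi powi (-(2*int n)) + phi powi (-(2*int n+1))"
      using Suc.IH[OF cn] by simp
    also have "phi powi (-(2*int n)) = phi powi (-(2*int n+1)) + phi powi (-(2*int (Suc n)))"
      using phi_powi_rec[of "-(2*int n+1)"] by (simp add: algebra_simps)
    finally show ?thesis by simp
  qed
qed

definition blk :: "nat \<Rightarrow> nat \<Rightarrow> int set" where
  "blk c n = (\<lambda>i. -(2*int i+1)) ` {c..<n}"

lemma R2:
  assumes n: "n \<ge> 1" and I: "Inv m S" and m1: "1 \<le> m" and mb: "m < luc (2*n)"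
  defines "T \<equiv> insert (2*int n+1) (insert (-(2*int n+2)) ((S - {-(2*int (cc m))}) \<union> blk (cc m) n))"
  shows "Inv (luc (2*n+1) + m) T \<and> card T + cc m = card S + n + 1"
proof -
  define c where "c = cc m"
  have rep: "is_phi_rep m S" using I Inv_def by simp
  have fS: "finite S" using rep is_phi_rep_def by simp
  have ncS: "\<forall>i\<in>S. i + 1 \<notin> S" using rep is_phi_rep_def by simp
  have cS: "-(2*int c) \<in> S" using I m1 c_def Inv_def by simp
  have hi: "\<forall>i\<in>S. i \<le> 2*int n - 1"
  proof
    fix i assume "i \<in> S"
    moreover have "real m < phi powi (2*int n)"
      using mb luc_even_lt[OF n] by linarith
    ultimately have "i < 2*int n" using top_bound rep by blast
    thus "i \<le> 2*int n - 1" by simp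
  qed
  have cn: "c \<le> n"
  proof -
    have "luc (2*n) \<le> luc (2*n+1)" using n by (intro luc_mono) auto
    thus ?thesis using mb c_def cc_le[of m n] by simp
  qed
  have lo: "\<forall>i\<in>S. -(2*int c) \<le> i" using I c_def unfolding Inv_def by simp
  have gap: "\<forall>i\<in>S. i \<noteq> -(2*int c) \<longrightarrow> -(2*int c) + 2 \<le> i"
  proof (intro ballI impI)
    fix i assume i: "i \<in> S" "i \<noteq> -(2*int c)"
    have "i \<noteq> -(2*int c) + 1" using ncS cS i(1) by fastforce
    thus "-(2*int c) + 2 \<le> i" using lo i by fastforce
  qed
  have ccN: "cc (luc (2*n+1) + m) = n + 1"
  proof (rule cc_eq)
    have "luc (2*(n+1)+1) = luc (2*n+1) + luc (2*n+2)" by (simp add: numeral_eq_Suc)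
    moreover have "luc (2*n) \<le> luc (2*n+2)" using n by (intro luc_mono) auto
    ultimately show "luc (2*n+1) + m \<le> luc (2*(n+1)+1)" using mb by simp
    show "n + 1 = 0 \<or> luc (2*(n+1)-1) < luc (2*n+1) + m" using m1 by simp
  qed
  define B where "B = blk c n"
  have Bdef: "\<forall>x. x \<in> B \<longleftrightarrow> (\<exists>i. c \<le> i \<and> i < n \<and> x = -(2*int i+1))"
    unfolding B_def blk_def by auto
  have Bhi: "\<forall>x\<in>B. x \<le> -(2*int c) - 1" using Bdef by fastforce
  have Blo: "\<forall>x\<in>B. -(2*int n) + 1 \<le> x" using Bdef by fastforce
  have Bodd: "\<forall>x\<in>B. odd x" using Bdef by fastforce
  have fB: "finite B" unfolding B_def blk_def by simp
  have injB: "inj_on (\<lambda>i. -(2*int i+1)) {c..<n}" by (auto simp: inj_on_def)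
  have cardB: "card B = n - c" unfolding B_def blk_def using injB by (simp add: card_image)
  have sumB: "(\<Sum>x\<in>B. phi powi x) = phi powi (-(2*int c)) - phi powi (-(2*int n))"
    unfolding B_def blk_def using injB telescope[OF cn] by (simp add: sum.reindex)
  define S' where "S' = S - {-(2*int c)}"
  have fS': "finite S'" using fS S'_def by simp
  have S'lo: "\<forall>x\<in>S'. -(2*int c) + 2 \<le> x" using gap S'_def by blast
  have S'hi: "\<forall>x\<in>S'. x \<le> 2*int n - 1" using hi S'_def by blast
  have sumS': "(\<Sum>x\<in>S'. phi powi x) = real m - phi powi (-(2*int c))"
    using rep cS fS unfolding S'_def is_phi_rep_def by (simp add: sum_diff1)
  have cardS': "card S' + 1 = card S" using cS fS S'_def
    by (metis One_nat_def Suc_pred card_Diff_singleton card_gt_0_iff empty_iff add.commute plus_1_eq_Suc)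
  have disj1: "S' \<inter> B = {}"
  proof -
    { fix x assume "x \<in> S'" "x \<in> B"
      hence False using S'lo Bhi by fastforce }
    thus ?thesis by blast
  qed
  have a1: "-(2*int n+2) \<notin> S' \<union> B" using S'lo Blo cn by fastforce
  have a2: "2*int n+1 \<notin> insert (-(2*int n+2)) (S' \<union> B)" using S'hi Bhi by fastforce
  have Teq: "T = insert (2*int n+1) (insert (-(2*int n+2)) (S' \<union> B))"
    unfolding T_def S'_def B_def c_def by simp
  have fT: "finite T" using Teq fS' fB by simp
  have sumT: "(\<Sum>x\<in>T. phi powi x) = phi powi (2*int n+1) + phi powi (-(2*int n+2)) + (real m - phi powi (-(2*int c))) + (phi powi (-(2*int c)) - phi powi (-(2*int n)))"
    using Teq a1 a2 fS' fB disj1 sumS' sumB by (simp add: sum.union_disjoint)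
  have pr: "phi powi (-(2*int n)) = phi powi (-(2*int n+1)) + phi powi (-(2*int n+2))"
    using phi_powi_rec[of "-(2*int n+1)"] by (simp add: algebra_simps)
  have val: "real (luc (2*n+1) + m) = (\<Sum>x\<in>T. phi powi x)"
    using sumT luc_odd[of n] pr by simp
  have ncT: "\<forall>i\<in>T. i + 1 \<notin> T"
  proof
    fix i assume iT: "i \<in> T"
    show "i + 1 \<notin> T"
    proof
      assume i1: "i + 1 \<in> T"
      have C1: "i = 2*int n+1 \<or> i = -(2*int n+2) \<or> i \<in> S' \<or> i \<in> B" using iT Teq by blast
      have C2: "i+1 = 2*int n+1 \<or> i+1 = -(2*int n+2) \<or> i+1 \<in> S' \<or> i+1 \<in> B" using i1 Teq by blast
      have nS': "i \<in> S' \<Longrightarrow> i + 1 \<notin> S'" using ncS S'_def by blast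
      have nB: "i \<in> B \<Longrightarrow> i + 1 \<notin> B"
      proof
        assume "i \<in> B" "i+1 \<in> B"
        hence "odd i" "odd (i+1)" using Bodd by blast+
        thus False by simp
      qed
      have x1: "i \<in> B \<Longrightarrow> i + 1 \<notin> S'"
      proof
        assume "i \<in> B" "i + 1 \<in> S'"
        hence "i \<le> -(2*int c) - 1" "-(2*int c) + 2 \<le> i + 1" using Bhi S'lo by auto
        thus False by simp
      qed
      have x2: "i \<in> S' \<Longrightarrow> i + 1 \<notin> B" using S'lo Bhi by fastforce
      show False using C1 C2 nS' nB x1 x2 S'lo S'hi Blo Bhi cn by fastforce
    qed
  qed
  have isrep: "is_phi_rep (luc (2*n+1) + m) T" unfolding is_phi_rep_def using fT ncT val by blast
  have lowT: "\<forall>i\<in>T. -2 * int (cc (luc (2*n+1) + m)) \<le> i"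
    using Teq ccN S'lo Blo cn by fastforce
  have minT: "-2 * int (cc (luc (2*n+1) + m)) \<in> T" using Teq ccN by simp
  have cardT: "card T = card S' + card B + 2"
    using Teq a1 a2 fS' fB disj1 by (simp add: card_Un_disjoint)
  show ?thesis unfolding Inv_def using isrep lowT minT cardT cardS' cardB cn c_def by simp
qed

lemma luc2: "luc 2 = 3" by (simp add: numeral_2_eq_2)
lemma luc3: "luc 3 = 4" by (simp add: numeral_3_eq_3)

lemma level: assumes "N \<ge> 3" shows "\<exists>n\<ge>1. luc (2*n) \<le> N \<and> N < luc (2*n+2)"
proof -
  define n where "n = (LEAST n. N < luc (2*n+2))"
  have ex: "N < luc (2*N+2)" using luc_ge[of "2*N+2"] by simp
  have n1: "N < luc (2*n+2)" unfolding n_def by (rule LeastI[of _ N]) (rule ex)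
  have "n \<noteq> 0"
  proof
    assume "n = 0"
    hence "N < 3" using n1 luc2 by simp
    thus False using assms by simp
  qed
  then obtain k where k: "n = Suc k" by (cases n) auto
  have "\<not> N < luc (2*k+2)"
  proof
    assume "N < luc (2*k+2)"
    hence "n \<le> k" unfolding n_def by (rule Least_le)
    thus False using k by simp
  qed
  hence "luc (2*n) \<le> N" using k by simp
  thus ?thesis using n1 \<open>n \<noteq> 0\<close> by (intro exI[of _ n]) auto
qed

lemma cc0: "cc 0 = 0" by (rule cc_eq) auto
lemma cc1: "cc 1 = 0" by (rule cc_eq) auto
lemma cc2: "cc 2 = 1" by (rule cc_eq) (auto simp: numeral_eq_Suc)

lemma two_rep: "phi powi 1 + phi powi (-2) = 2"
proof -
  have a: "phi powi 1 = phi powi 0 + phi powi (-1)" using phi_powi_rec[of 0] by simp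
  have b: "phi powi 0 = phi powi (-1) + phi powi (-2)" using phi_powi_rec[of "-1"] by simp
  show ?thesis using a b by simp
qed

lemma exists_Inv: "\<exists>S. Inv N S"
proof (induction N rule: less_induct)
  case (less N)
  show ?case
  proof (cases "N \<ge> 3")
    case False
    hence "N = 0 \<or> N = 1 \<or> N = 2" by auto
    moreover have "Inv 0 {}" unfolding Inv_def is_phi_rep_def using cc0 by simp
    moreover have "Inv 1 {0}" unfolding Inv_def is_phi_rep_def using cc1 by simp
    moreover have "Inv 2 {1, -2}" unfolding Inv_def is_phi_rep_def using cc2 two_rep by simp
    ultimately show ?thesis by blast
  next
    case True
    then obtain n where n: "n \<ge> 1" "luc (2*n) \<le> N" "N < luc (2*n+2)" using level by blast
    have l2: "luc (2*n+2) = luc (2*n) + luc (2*n+1)" by (simp add: numeral_eq_Suc)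
    have l1: "luc (2*n+1) = luc (2*n-1) + luc (2*n)"
    proof -
      obtain k where k: "n = Suc k" using n(1) by (cases n) auto
      have "luc (Suc (Suc (2*k+1))) = luc (2*k+1) + luc (Suc (2*k+1))" by simp
      moreover have "2*n+1 = Suc (Suc (2*k+1))" "2*n-1 = 2*k+1" "2*n = Suc (2*k+1)" using k by auto
      ultimately show ?thesis by simp
    qed
    show ?thesis
    proof (cases "N \<le> luc (2*n+1)")
      case True
      define m where "m = N - luc (2*n)"
      have "m < N" using n luc_pos[of "2*n"] m_def by simp
      then obtain S where "Inv m S" using less by blast
      moreover have "m \<le> luc (2*n-1)" using True l1 m_def by simp
      ultimately have "Inv (luc (2*n) + m) (insert (2*int n) (insert (-(2*int n)) S))"
        using R1 n(1) by blast
      moreover have "luc (2*n) + m = N" using m_def n by simp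
      ultimately show ?thesis by auto
    next
      case False
      define m where "m = N - luc (2*n+1)"
      have "m < N" using False luc_pos[of "2*n+1"] m_def by simp
      then obtain S where "Inv m S" using less by blast
      moreover have "1 \<le> m" "m < luc (2*n)" using False n l2 m_def by auto
      ultimately have "\<exists>T. Inv (luc (2*n+1) + m) T"
        using R2 n(1) by blast
      moreover have "luc (2*n+1) + m = N" using m_def False by simp
      ultimately show ?thesis by auto
    qed
  qed
qed

definition rep :: "nat \<Rightarrow> int set" where "rep N = (THE S. is_phi_rep N S)"

lemma Inv_rep: "Inv N S \<Longrightarrow> rep N = S"
  unfolding rep_def Inv_def using rep_unique' by (intro the_equality) blast+

lemma rep_Inv: "Inv N (rep N)"
  using exists_Inv Inv_rep by metis

lemma s_beta_rep: "s_beta N = card (rep N)"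
  unfolding s_beta_def rep_def by simp

lemma S1: assumes "n \<ge> 1" "m \<le> luc (2*n-1)" shows "s_beta (luc (2*n) + m) = s_beta m + 2"
  using R1[OF assms(1) rep_Inv assms(2)] Inv_rep s_beta_rep by metis

lemma S2: assumes "n \<ge> 1" "1 \<le> m" "m < luc (2*n)"
  shows "s_beta (luc (2*n+1) + m) + cc m = s_beta m + n + 1"
  using R2[OF assms(1) rep_Inv assms(2,3)] Inv_rep s_beta_rep by metis

lemma s0: "s_beta 0 = 0" and s1: "s_beta 1 = 1" and s2: "s_beta 2 = 2"
proof -
  have "Inv 0 {}" unfolding Inv_def is_phi_rep_def using cc0 by simp
  thus "s_beta 0 = 0" using Inv_rep s_beta_rep by simp
  have "Inv 1 {0}" unfolding Inv_def is_phi_rep_def using cc1 by simp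
  thus "s_beta 1 = 1" using Inv_rep s_beta_rep by simp
  have "Inv 2 {1, -2}" unfolding Inv_def is_phi_rep_def using cc2 two_rep by simp
  thus "s_beta 2 = 2" using Inv_rep s_beta_rep by simp
qed



lemma luc_vals: "luc 4 = 7" "luc 5 = 11" "luc 6 = 18" "luc 7 = 29"
  by (simp_all add: eval_nat_numeral)

definition dd :: "nat \<Rightarrow> int" where "dd N = int (s_beta (N+1)) - int (s_beta N)"
definition sig :: "nat \<Rightarrow> int" where "sig N = sgn (dd N)"

lemma luc_rec: "luc (n+2) = luc n + luc (n+1)" by (simp add: numeral_2_eq_2)

lemma s_odd: "s_beta (luc (2*n+1)) = 2*n+1"
proof (induction n)
  case 0 then show ?case using s1 by simp
next
  case (Suc n)
  have "luc (2*Suc n+1) = luc (2*Suc n) + luc (2*n+1)"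
    using luc_rec[of "2*n+1"] by simp
  moreover have "s_beta (luc (2*Suc n) + luc (2*n+1)) = s_beta (luc (2*n+1)) + 2"
    by (rule S1) auto
  ultimately have "s_beta (luc (2*Suc n+1)) = s_beta (luc (2*n+1)) + 2" by metis
  thus ?case using Suc by simp
qed

lemma cc_even: "n \<ge> 1 \<Longrightarrow> cc (luc (2*n)) = n"
  by (rule cc_eq) (auto intro!: luc_mono luc_strict)

lemma cc_odd: "cc (luc (2*n+1)) = n"
proof (rule cc_eq)
  show "n = 0 \<or> luc (2*n-1) < luc (2*n+1)" by (cases "n = 0") (auto intro!: luc_strict)
qed simp

lemma cc_even_m1: "n \<ge> 2 \<Longrightarrow> cc (luc (2*n) - 1) = n"
proof (rule cc_eq)
  assume n: "n \<ge> 2"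
  have "luc (2*n) \<le> luc (2*n+1)" using n by (intro luc_mono) auto
  thus "luc (2*n) - 1 \<le> luc (2*n+1)" by simp
  have "luc (2*n-2) \<ge> luc 2" using n by (intro luc_mono) auto
  hence "luc (2*n-2) \<ge> 3" using luc2 by simp
  moreover have "luc (2*n) = luc (2*n-2) + luc (2*n-1)"
  proof -
    obtain k where k: "n = k + 2" using n by (metis le_add_diff_inverse2)
    have "2*n = (2*k+2) + 2" "2*n-2 = 2*k+2" "2*n-1 = (2*k+2)+1" using k by auto
    thus ?thesis using luc_rec[of "2*k+2"] by metis
  qed
  ultimately show "n = 0 \<or> luc (2*n-1) < luc (2*n) - 1" by linarith
qed

lemma s_even_m1: "n \<ge> 1 \<Longrightarrow> s_beta (luc (2*n) - 1) = n + 1"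
proof (induction n rule: dec_induct)
  case base then show ?case using s2 luc2 by simp
next
  case (step n)
  have ln: "luc (2*Suc n) - 1 = luc (2*n+1) + (luc (2*n) - 1)"
    using luc_rec[of "2*n"] luc_pos[of "2*n"] by simp
  have "s_beta (luc (2*n+1) + (luc (2*n) - 1)) + cc (luc (2*n) - 1) = s_beta (luc (2*n) - 1) + n + 1"
  proof (rule S2)
    show "1 \<le> luc (2*n) - 1" using luc_mono[of 2 "2*n"] luc2 step by simp
    show "luc (2*n) - 1 < luc (2*n)" using luc_pos[of "2*n"] by simp
  qed (use step in auto)
  moreover have "cc (luc (2*n) - 1) = n"
  proof (cases "n = 1")
    case True
    then show ?thesis using cc2 luc2 by simp
  next
    case False then show ?thesis using step by (intro cc_even_m1) auto
  qed
  ultimately show ?case using ln step by simp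
qed

lemma s_even: "n \<ge> 1 \<Longrightarrow> s_beta (luc (2*n)) = 2"
  using S1[of n 0] s0 by simp

lemma dd_S1: assumes "n \<ge> 1" "m < luc (2*n-1)" shows "dd (luc (2*n) + m) = dd m"
proof -
  have "s_beta (luc (2*n) + m) = s_beta m + 2" using assms by (intro S1) auto
  moreover have "s_beta (luc (2*n) + (m+1)) = s_beta (m+1) + 2" using assms by (intro S1) auto
  ultimately show ?thesis unfolding dd_def by (simp add: add.assoc)
qed

lemma dd_S2: assumes "n \<ge> 1" "1 \<le> m" "m + 1 < luc (2*n)"
  shows "dd (luc (2*n+1) + m) = dd m - (int (cc (m+1)) - int (cc m))"
proof -
  have "s_beta (luc (2*n+1) + m) + cc m = s_beta m + n + 1" using assms by (intro S2) auto
  moreover have "s_beta (luc (2*n+1) + (m+1)) + cc (m+1) = s_beta (m+1) + n + 1"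
    using assms by (intro S2) auto
  ultimately show ?thesis unfolding dd_def by (simp add: add.assoc)
qed

lemma luc_ge3: "n \<ge> 1 \<Longrightarrow> luc (2*n) \<ge> 3"
  using luc_mono[of 2 "2*n"] luc2 by simp

lemma dd_odd: assumes "n \<ge> 1" shows "dd (luc (2*n+1)) = 1 - int n"
proof -
  have "s_beta (luc (2*n+1) + 1) + cc 1 = s_beta 1 + n + 1"
    using assms luc_ge3[OF assms] by (intro S2) auto
  thus ?thesis unfolding dd_def using s_odd[of n] s1 cc1 by simp
qed

lemma dd_even_m1: assumes "n \<ge> 1" shows "dd (luc (2*n) - 1) = 1 - int n"
proof -
  have "luc (2*n) - 1 + 1 = luc (2*n)" using luc_pos[of "2*n"] by simp
  thus ?thesis unfolding dd_def using s_even[OF assms] s_even_m1[OF assms] by simp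
qed

lemma cc_const: assumes "k \<ge> 1" "luc (2*k-1) < t" "t+1 \<le> luc (2*k+1)"
  shows "cc t = k" "cc (t+1) = k"
  using assms by (auto intro!: cc_eq)

context
  fixes p :: nat
  assumes p2: "p \<ge> 2"
begin

lemma luc_2p2: "luc (2*p+2) = luc (2*p) + luc (2*p+1)" using luc_rec[of "2*p"] by simp
lemma luc_2p3: "luc (2*p+3) = luc (2*p+1) + luc (2*p+2)" using luc_rec[of "2*p+1"] by (simp add: numeral_3_eq_3)
lemma luc_2p4: "luc (2*p+4) = luc (2*p+2) + luc (2*p+3)" using luc_rec[of "2*p+2"] by (simp add: eval_nat_numeral)
lemma a_le_b: "luc (2*p) \<le> luc (2*p+1)" using p2 by (intro luc_mono) auto
lemma a_ge3: "luc (2*p) \<ge> 3" using luc_ge3[of p] p2 by simp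

lemma F1: "m < luc (2*p) \<Longrightarrow> sig (luc (2*p+2) + m) = sig m"
proof -
  assume m: "m < luc (2*p)"
  have "dd (luc (2*(p+1)) + m) = dd m" using m a_le_b by (intro dd_S1) auto
  thus ?thesis unfolding sig_def by simp
qed

lemma F2: "m < luc (2*p+1) \<Longrightarrow> sig (luc (2*p+2) + luc (2*p) + m) = sig (luc (2*p) + m)"
proof -
  assume m: "m < luc (2*p+1)"
  define t where "t = luc (2*p) + m"
  show ?thesis
  proof (cases "t < luc (2*p+1)")
    case True
    have "dd (luc (2*(p+1)) + t) = dd t" using True by (intro dd_S1) auto
    thus ?thesis unfolding sig_def t_def by (simp add: add.assoc)
  next
    case False
    define m' where "m' = t - luc (2*p+1)"
    have tm: "t = luc (2*p+1) + m'" using False m'_def by simp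
    have m'a: "m' < luc (2*p)" using tm t_def m by simp
    have big: "luc (2*p+2) + t = luc (2*(p+1)+1) + m'" using tm luc_2p3 by simp
    have e: "luc (2*p+2) + luc (2*p) + m = luc (2*(p+1)+1) + m'" using big t_def by linarith
    have e2: "luc (2*p) + m = luc (2*p+1) + m'" using tm t_def by simp
    show ?thesis
    proof (cases "m' = 0")
      case True
      have "dd (luc (2*(p+1)+1)) = 1 - int (p+1)" by (rule dd_odd) simp
      moreover have "dd (luc (2*p+1)) = 1 - int p" using p2 by (intro dd_odd) simp
      ultimately show ?thesis unfolding sig_def e e2 using True p2 by simp
    next
      case False
      show ?thesis
      proof (cases "m' + 1 < luc (2*p)")
        case True
        have "dd (luc (2*(p+1)+1) + m') = dd m' - (int (cc (m'+1)) - int (cc m'))"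
          using False True luc_2p2 by (intro dd_S2) auto
        moreover have "dd (luc (2*p+1) + m') = dd m' - (int (cc (m'+1)) - int (cc m'))"
          using False True p2 by (intro dd_S2) auto
        ultimately show ?thesis unfolding sig_def e e2 by simp
      next
        case False
        hence m'e: "m' = luc (2*p) - 1" using m'a by simp
        have c1: "cc (luc (2*p) - 1) = p" using p2 by (rule cc_even_m1)
        have c2: "cc (luc (2*p)) = p" using p2 by (intro cc_even) simp
        have "s_beta (luc (2*(p+1)+1) + (luc (2*p) - 1)) + cc (luc (2*p) - 1) = s_beta (luc (2*p) - 1) + (p+1) + 1"
          using a_ge3 luc_2p2 by (intro S2) auto
        moreover have "s_beta (luc (2*(p+1)+1) + luc (2*p)) + cc (luc (2*p)) = s_beta (luc (2*p)) + (p+1) + 1"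
          using a_ge3 luc_2p2 luc_pos[of "2*p+1"] by (intro S2) auto
        moreover have "luc (2*(p+1)+1) + (luc (2*p) - 1) + 1 = luc (2*(p+1)+1) + luc (2*p)"
          using a_ge3 by simp
        ultimately have L1: "dd (luc (2*(p+1)+1) + (luc (2*p) - 1)) = 1 - int p"
          unfolding dd_def using c1 c2 s_even[of p] s_even_m1[of p] p2 by simp
        define Y where "Y = luc (2*p+1) + (luc (2*p) - 1)"
        have "s_beta Y + cc (luc (2*p) - 1) = s_beta (luc (2*p) - 1) + p + 1"
          unfolding Y_def using a_ge3 p2 by (intro S2) auto
        hence sY: "s_beta Y = p + 2" using c1 s_even_m1[of p] p2 by simp
        have "Y + 1 = luc (2*(p+1))"
          unfolding Y_def using a_ge3 luc_2p2 luc_pos[of "2*p+1"] by simp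
        moreover have "s_beta (luc (2*(p+1))) = 2" by (rule s_even) simp
        ultimately have sY1: "s_beta (Y+1) = 2" by simp
        have L2: "dd (luc (2*p+1) + (luc (2*p) - 1)) = - int p"
          unfolding Y_def[symmetric] dd_def sY sY1 by simp
        show ?thesis unfolding sig_def e e2 using L1 L2 m'e p2 by simp
      qed
    qed
  qed
qed

lemma F3: "m < luc (2*p+1) \<Longrightarrow> sig (2 * luc (2*p+2) + m) = sig (luc (2*p) + m)"
proof -
  assume m: "m < luc (2*p+1)"
  define t where "t = luc (2*p) + m"
  have tb: "t < luc (2*p+2)" using m t_def luc_2p2 by simp
  have eq: "2 * luc (2*p+2) + m = luc (2*(p+1)+1) + t" using t_def luc_2p2 luc_2p3 by simp
  have t1: "1 \<le> t" using t_def a_ge3 by simp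
  show ?thesis
  proof (cases "t + 1 < luc (2*p+2)")
    case True
    have D: "dd (luc (2*(p+1)+1) + t) = dd t - (int (cc (t+1)) - int (cc t))"
      using True t1 by (intro dd_S2) auto
    show ?thesis
    proof (cases "t = luc (2*p+1)")
      case True
      have "cc (t+1) = p + 1"
      proof (rule cc_eq)
        show "t + 1 \<le> luc (2*(p+1)+1)" using True luc_2p3 luc_pos[of "2*p"] by simp
        show "p + 1 = 0 \<or> luc (2*(p+1)-1) < t + 1" using True by simp
      qed
      moreover have "cc t = p" using True cc_odd by simp
      moreover have "dd t = 1 - int p" using True dd_odd p2 by simp
      ultimately show ?thesis unfolding sig_def eq t_def[symmetric] using D p2 by simp
    next
      case False
      have "cc (t+1) = cc t"
      proof (cases "t < luc (2*p+1)")
        case True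
        have "luc (2*p-1) < luc (2*p)" using p2 by (intro luc_strict) auto
        hence "cc t = p \<and> cc (t+1) = p" using cc_const[of p t] True t_def p2 by simp
        thus ?thesis by simp
      next
        case False2: False
        hence "luc (2*(p+1)-1) < t" using False by simp
        moreover have "t + 1 \<le> luc (2*(p+1)+1)" using tb luc_2p3 by simp
        ultimately have "cc t = p+1 \<and> cc (t+1) = p+1" using cc_const[of "p+1" t] by simp
        thus ?thesis by simp
      qed
      thus ?thesis unfolding sig_def eq t_def[symmetric] using D by simp
    qed
  next
    case False
    hence te: "t = luc (2*p+2) - 1" using tb by simp
    have c1: "cc (luc (2*(p+1)) - 1) = p+1" using p2 by (intro cc_even_m1) simp
    define X where "X = luc (2*(p+1)+1) + (luc (2*(p+1)) - 1)"
    have "s_beta X + cc (luc (2*(p+1)) - 1) = s_beta (luc (2*(p+1)) - 1) + (p+1) + 1"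
      unfolding X_def using luc_ge3[of "p+1"] by (intro S2) auto
    hence sX: "s_beta X = p + 3" using c1 s_even_m1[of "p+1"] by simp
    have "X + 1 = luc (2*(p+2))"
      unfolding X_def using luc_ge3[of "p+1"] luc_2p4 luc_2p3 by (simp add: algebra_simps)
    moreover have "s_beta (luc (2*(p+2))) = 2" by (rule s_even) simp
    ultimately have sX1: "s_beta (X+1) = 2" by simp
    have L1: "dd X = -1 - int p" unfolding dd_def sX sX1 by simp
    have L2: "dd (luc (2*(p+1)) - 1) = - int p" using dd_even_m1[of "p+1"] by simp
    have "luc (2*(p+1)+1) + t = X" unfolding X_def te by simp
    hence eX: "2 * luc (2*p+2) + m = X" using eq by simp
    have et: "luc (2*p) + m = luc (2*(p+1)) - 1" using te t_def by simp
    show ?thesis unfolding sig_def eX et using L1 L2 p2 by simp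
  qed
qed

end

lemma luc1: "luc 1 = 1" by simp
lemmas lucv = luc1 luc2 luc3 luc_vals

lemma S1c: "n \<ge> 1 \<Longrightarrow> m \<le> luc (2*n-1) \<Longrightarrow> N = luc (2*n) + m \<Longrightarrow> s_beta N = s_beta m + 2"
  using S1 by simp
lemma S2c: "n \<ge> 1 \<Longrightarrow> 1 \<le> m \<Longrightarrow> m < luc (2*n) \<Longrightarrow> N = luc (2*n+1) + m \<Longrightarrow> s_beta N + cc m = s_beta m + n + 1"
  using S2 by simp

lemma cc3: "cc 3 = 1" by (rule cc_eq) (simp_all add: lucv)
lemma cc4: "cc 4 = 1" by (rule cc_eq) (simp_all add: lucv)
lemma cc5: "cc 5 = 2" by (rule cc_eq) (simp_all add: lucv)
lemma cc6: "cc 6 = 2" by (rule cc_eq) (simp_all add: lucv)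

lemma s3: "s_beta 3 = 2" using S1c[of 1 0 3] s0 by (simp add: lucv)
lemma s4: "s_beta 4 = 3" using S1c[of 1 1 4] s1 by (simp add: lucv)
lemma s5: "s_beta 5 = 3" using S2c[of 1 1 5] s1 cc1 by (simp add: lucv)
lemma s6: "s_beta 6 = 3" using S2c[of 1 2 6] s2 cc2 by (simp add: lucv)
lemma s7: "s_beta 7 = 2" using S1c[of 2 0 7] s0 by (simp add: lucv)
lemma s8: "s_beta 8 = 3" using S1c[of 2 1 8] s1 by (simp add: lucv)
lemma s9: "s_beta 9 = 4" using S1c[of 2 2 9] s2 by (simp add: lucv)
lemma s10: "s_beta 10 = 4" using S1c[of 2 3 10] s3 by (simp add: lucv)
lemma s11: "s_beta 11 = 5" using S1c[of 2 4 11] s4 by (simp add: lucv)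
lemma s12: "s_beta 12 = 4" using S2c[of 2 1 12] s1 cc1 by (simp add: lucv)
lemma s13: "s_beta 13 = 4" using S2c[of 2 2 13] s2 cc2 by (simp add: lucv)
lemma s14: "s_beta 14 = 4" using S2c[of 2 3 14] s3 cc3 by (simp add: lucv)
lemma s15: "s_beta 15 = 5" using S2c[of 2 4 15] s4 cc4 by (simp add: lucv)
lemma s16: "s_beta 16 = 4" using S2c[of 2 5 16] s5 cc5 by (simp add: lucv)
lemma s17: "s_beta 17 = 4" using S2c[of 2 6 17] s6 cc6 by (simp add: lucv)
lemma s18: "s_beta 18 = 2" using S1c[of 3 0 18] s0 by (simp add: lucv)

lemma s1': "s_beta (Suc 0) = 1" using s1 by simp
lemma s2': "s_beta (Suc (Suc 0)) = 2" using s2 by (simp add: numeral_2_eq_2)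
lemmas svals = s0 s1 s1' s2' s2 s3 s4 s5 s6 s7 s8 s9 s10 s11 s12 s13 s14 s15 s16 s17 s18

definition cX :: "int list" where "cX = [1,1,0,1,0,0,-1]"
definition cY :: "int list" where "cY = [1,1,0,1,-1,0,0,1,-1,0,-1]"

lemma sig_vals: "sig 0 = 1" "sig 1 = 1" "sig 2 = 0" "sig 3 = 1" "sig 4 = 0" "sig 5 = 0" "sig 6 = -1"
  "sig 7 = 1" "sig 8 = 1" "sig 9 = 0" "sig 10 = 1" "sig 11 = -1" "sig 12 = 0" "sig 13 = 0"
  "sig 14 = 1" "sig 15 = -1" "sig 16 = 0" "sig 17 = -1"
  unfolding sig_def dd_def by (simp_all add: svals)

lemma base_X: "\<forall>i<7. sig i = cX ! i"
proof -
  have "\<forall>i::nat<7. i = 0 \<or> i = 1 \<or> i = 2 \<or> i = 3 \<or> i = 4 \<or> i = 5 \<or> i = 6" by presburger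
  thus ?thesis unfolding cX_def using sig_vals by auto
qed

lemma base_Y: "\<forall>i<11. sig (7+i) = cY ! i"
proof -
  have "\<forall>i::nat<11. i = 0 \<or> i = 1 \<or> i = 2 \<or> i = 3 \<or> i = 4 \<or> i = 5 \<or> i = 6 \<or> i = 7 \<or> i = 8 \<or> i = 9 \<or> i = 10" by presburger
  thus ?thesis unfolding cY_def using sig_vals by auto
qed



declare luc.simps(3)[simp del]

primrec AB :: "nat \<Rightarrow> int list \<times> int list" where
  "AB 0 = (cX, cY)"
| "AB (Suc n) = (fst (AB n) @ snd (AB n), fst (AB n) @ snd (AB n) @ snd (AB n))"

abbreviation "AA n \<equiv> fst (AB n)"
abbreviation "BB n \<equiv> snd (AB n)"

lemma AB_len: "length (AA n) = luc (2*n+4) \<and> length (BB n) = luc (2*n+5)"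
proof (induction n)
  case 0 then show ?case by (simp add: cX_def cY_def lucv)
next
  case (Suc n)
  have "luc (2*Suc n+4) = luc (2*n+4) + luc (2*n+5)" using luc_rec[of "2*n+4"] by (simp add: algebra_simps)
  moreover have "luc (2*Suc n+5) = luc (2*n+5) + luc (2*Suc n+4)" using luc_rec[of "2*n+5"] by (simp add: algebra_simps)
  ultimately show ?case using Suc by simp
qed

lemma AB_sig: "(\<forall>i<length (AA n). sig i = AA n ! i) \<and> (\<forall>i<length (BB n). sig (luc (2*n+4) + i) = BB n ! i)"
proof (induction n)
  case 0 then show ?case using base_X base_Y by (simp add: cX_def cY_def lucv)
next
  case (Suc n)
  define p where "p = n + 2"
  have p2: "p \<ge> 2" using p_def by simp
  have e1: "2*p = 2*n+4" and e2: "2*p+1 = 2*n+5" and e3: "2*Suc n+4 = 2*p+2" by (simp_all add: p_def)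
  have la: "length (AA n) = luc (2*p)" unfolding e1 using AB_len[of n] by simp
  have lb: "length (BB n) = luc (2*p+1)" unfolding e2 using AB_len[of n] by simp
  have lA1: "luc (2*Suc n+4) = luc (2*p+2)" unfolding e3 ..
  have IA: "\<forall>i<luc (2*p). sig i = AA n ! i" using Suc.IH la by simp
  have IB: "\<forall>i<luc (2*p+1). sig (luc (2*p) + i) = BB n ! i" using Suc.IH lb unfolding e1 by simp
  have partA: "\<forall>i<length (AA (Suc n)). sig i = AA (Suc n) ! i"
  proof (intro allI impI)
    fix i assume i: "i < length (AA (Suc n))"
    show "sig i = AA (Suc n) ! i"
    proof (cases "i < luc (2*p)")
      case True then show ?thesis using IA la by (simp add: nth_append)
    next
      case False
      hence "i - luc (2*p) < luc (2*p+1)" using i la lb by simp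
      then show ?thesis using IB[rule_format, of "i - luc (2*p)"] False la by (simp add: nth_append)
    qed
  qed
  have partB: "\<forall>i<length (BB (Suc n)). sig (luc (2*Suc n+4) + i) = BB (Suc n) ! i"
  proof (intro allI impI)
    fix i assume i: "i < length (BB (Suc n))"
    show "sig (luc (2*Suc n+4) + i) = BB (Suc n) ! i"
    proof (cases "i < luc (2*p)")
      case True
      then show ?thesis using IA la F1[OF p2 True] lA1 by (simp add: nth_append)
    next
      case False
      show ?thesis
      proof (cases "i < luc (2*p) + luc (2*p+1)")
        case True
        define j where "j = i - luc (2*p)"
        have j: "j < luc (2*p+1)" "i = luc (2*p) + j" using True False j_def by auto
        have "sig (luc (2*p+2) + i) = sig (luc (2*p) + j)" using F2[OF p2 j(1)] j(2) by (simp add: add.assoc)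
        then show ?thesis using IB j la lb lA1 by (simp add: nth_append)
      next
        case False2: False
        define j where "j = i - luc (2*p) - luc (2*p+1)"
        have j: "j < luc (2*p+1)" "i = luc (2*p) + luc (2*p+1) + j"
          using i False2 j_def la lb by auto
        have "luc (2*p+2) + i = 2 * luc (2*p+2) + j" using j(2) luc_2p2[OF p2] by simp
        hence "sig (luc (2*p+2) + i) = sig (luc (2*p) + j)" using F3[OF p2 j(1)] by metis
        then show ?thesis using IB j la lb lA1 by (simp add: nth_append)
      qed
    qed
  qed
  show ?case using partA partB by blast
qed

lemma sig_AA: "i < luc (2*n+4) \<Longrightarrow> sig i = AA n ! i"
  using AB_sig[of n] AB_len[of n] by simp



definition ps :: "nat list \<Rightarrow> nat \<Rightarrow> nat" where "ps G k = sum_list (take k G)"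

lemma ps_app1: "k \<le> length G1 \<Longrightarrow> ps (G1 @ G2) k = ps G1 k"
  unfolding ps_def by simp

lemma ps_app2: "ps (G1 @ G2) (length G1 + k) = sum_list G1 + ps G2 k"
  unfolding ps_def by simp

lemma ps_le: "ps G k \<le> sum_list G"
  unfolding ps_def by (metis append_take_drop_id le_add1 sum_list_append)

lemma ps_sum: "k \<le> length G \<Longrightarrow> ps G k = (\<Sum>i<k. G ! i)"
  unfolding ps_def by (simp add: sum_list_sum_nth min_def atLeast0LessThan)

definition goodS :: "int \<Rightarrow> nat \<Rightarrow> int list \<Rightarrow> nat list \<Rightarrow> bool" where
  "goodS v off W G \<longleftrightarrow> sum_list G = length W \<and>
     (\<forall>i. (i < length W \<and> W ! i = v) \<longleftrightarrow> (\<exists>k<length G. i = off + ps G k))"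

definition goodE :: "int \<Rightarrow> int list \<Rightarrow> nat list \<Rightarrow> bool" where
  "goodE v W G \<longleftrightarrow> sum_list G = length W \<and> (\<forall>x\<in>set G. 0 < x) \<and>
     (\<forall>i. (i < length W \<and> W ! i = v) \<longleftrightarrow> (\<exists>k<length G. i + 1 = ps G (Suc k)))"

lemma goodS_app:
  assumes g1: "goodS v off W1 G1" and g2: "goodS v off W2 G2"
  shows "goodS v off (W1 @ W2) (G1 @ G2)"
proof -
  have s1: "sum_list G1 = length W1" using g1 goodS_def by simp
  have s2: "sum_list G2 = length W2" using g2 goodS_def by simp
  have h1: "\<And>i. (i < length W1 \<and> W1 ! i = v) \<longleftrightarrow> (\<exists>k<length G1. i = off + ps G1 k)"
    using g1 goodS_def by blast
  have h2: "\<And>i. (i < length W2 \<and> W2 ! i = v) \<longleftrightarrow> (\<exists>k<length G2. i = off + ps G2 k)"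
    using g2 goodS_def by blast
  have "(i < length (W1@W2) \<and> (W1@W2) ! i = v) \<longleftrightarrow> (\<exists>k<length (G1@G2). i = off + ps (G1@G2) k)" for i
  proof
    assume a: "i < length (W1@W2) \<and> (W1@W2) ! i = v"
    show "\<exists>k<length (G1@G2). i = off + ps (G1@G2) k"
    proof (cases "i < length W1")
      case True
      then obtain k where "k < length G1" "i = off + ps G1 k" using a h1 by (auto simp: nth_append)
      thus ?thesis using ps_app1[of k G1 G2] by (intro exI[of _ k]) auto
    next
      case False
      hence "i - length W1 < length W2 \<and> W2 ! (i - length W1) = v" using a by (auto simp: nth_append)
      then obtain k where k: "k < length G2" "i - length W1 = off + ps G2 k" using h2 by blast
      hence "i = off + ps (G1@G2) (length G1 + k)" using ps_app2[of G1 G2 k] s1 False by simp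
      thus ?thesis using k by (intro exI[of _ "length G1 + k"]) auto
    qed
  next
    assume "\<exists>k<length (G1@G2). i = off + ps (G1@G2) k"
    then obtain k where k: "k < length (G1@G2)" "i = off + ps (G1@G2) k" by blast
    show "i < length (W1@W2) \<and> (W1@W2) ! i = v"
    proof (cases "k < length G1")
      case True
      hence "i = off + ps G1 k" using k ps_app1[of k G1 G2] by simp
      hence "i < length W1 \<and> W1 ! i = v" using h1 True by blast
      thus ?thesis by (simp add: nth_append)
    next
      case False
      define k' where "k' = k - length G1"
      have "k = length G1 + k'" using False k'_def by simp
      hence ik: "i = length W1 + (off + ps G2 k')" using k ps_app2[of G1 G2 k'] s1 by simp
      have "k' < length G2" using k False k'_def by simp
      hence "off + ps G2 k' < length W2 \<and> W2 ! (off + ps G2 k') = v" using h2 by blast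
      thus ?thesis using ik by (simp add: nth_append)
    qed
  qed
  thus ?thesis unfolding goodS_def using s1 s2 by simp
qed

lemma ps_Suc_pos: "(\<forall>x\<in>set G. 0 < x) \<Longrightarrow> k < length G \<Longrightarrow> ps G (Suc k) > 0"
  unfolding ps_def by (simp add: take_Suc_conv_app_nth)

lemma goodE_app:
  assumes g1: "goodE v W1 G1" and g2: "goodE v W2 G2"
  shows "goodE v (W1 @ W2) (G1 @ G2)"
proof -
  have s1: "sum_list G1 = length W1" using g1 goodE_def by simp
  have s2: "sum_list G2 = length W2" using g2 goodE_def by simp
  have p1: "\<forall>x\<in>set G1. 0 < x" using g1 goodE_def by simp
  have p2: "\<forall>x\<in>set G2. 0 < x" using g2 goodE_def by simp
  have h1: "\<And>i. (i < length W1 \<and> W1 ! i = v) \<longleftrightarrow> (\<exists>k<length G1. i + 1 = ps G1 (Suc k))"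
    using g1 goodE_def by blast
  have h2: "\<And>i. (i < length W2 \<and> W2 ! i = v) \<longleftrightarrow> (\<exists>k<length G2. i + 1 = ps G2 (Suc k))"
    using g2 goodE_def by blast
  have "(i < length (W1@W2) \<and> (W1@W2) ! i = v) \<longleftrightarrow> (\<exists>k<length (G1@G2). i + 1 = ps (G1@G2) (Suc k))" for i
  proof
    assume a: "i < length (W1@W2) \<and> (W1@W2) ! i = v"
    show "\<exists>k<length (G1@G2). i + 1 = ps (G1@G2) (Suc k)"
    proof (cases "i < length W1")
      case True
      then obtain k where "k < length G1" "i + 1 = ps G1 (Suc k)" using a h1 by (auto simp: nth_append)
      thus ?thesis using ps_app1[of "Suc k" G1 G2] by (intro exI[of _ k]) auto
    next
      case False
      hence "i - length W1 < length W2 \<and> W2 ! (i - length W1) = v" using a by (auto simp: nth_append)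
      then obtain k where k: "k < length G2" "i - length W1 + 1 = ps G2 (Suc k)" using h2 by blast
      hence "i + 1 = ps (G1@G2) (length G1 + Suc k)" using ps_app2[of G1 G2 "Suc k"] s1 False by simp
      thus ?thesis using k by (intro exI[of _ "length G1 + k"]) auto
    qed
  next
    assume "\<exists>k<length (G1@G2). i + 1 = ps (G1@G2) (Suc k)"
    then obtain k where k: "k < length (G1@G2)" "i + 1 = ps (G1@G2) (Suc k)" by blast
    show "i < length (W1@W2) \<and> (W1@W2) ! i = v"
    proof (cases "k < length G1")
      case True
      hence "i + 1 = ps G1 (Suc k)" using k ps_app1[of "Suc k" G1 G2] by simp
      hence "i < length W1 \<and> W1 ! i = v" using h1 True by blast
      thus ?thesis by (simp add: nth_append)
    next
      case False
      define k' where "k' = k - length G1"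
      have "Suc k = length G1 + Suc k'" using False k'_def by simp
      hence ik: "i + 1 = length W1 + ps G2 (Suc k')" using k ps_app2[of G1 G2 "Suc k'"] s1 by simp
      have kl: "k' < length G2" using k False k'_def by simp
      hence "ps G2 (Suc k') > 0" using p2 ps_Suc_pos by blast
      hence ik2: "i = length W1 + (ps G2 (Suc k') - 1)" using ik by simp
      have "ps G2 (Suc k') - 1 + 1 = ps G2 (Suc k')" using \<open>ps G2 (Suc k') > 0\<close> by simp
      hence "ps G2 (Suc k') - 1 < length W2 \<and> W2 ! (ps G2 (Suc k') - 1) = v" using h2 kl by blast
      thus ?thesis using ik2 by (simp add: nth_append)
    qed
  qed
  thus ?thesis unfolding goodE_def using s1 s2 p1 p2 by auto
qed

primrec blocks :: "'a list \<Rightarrow> 'a list \<Rightarrow> nat \<Rightarrow> 'a list \<times> 'a list" where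
  "blocks X Y 0 = (X, Y)"
| "blocks X Y (Suc n) = (fst (blocks X Y n) @ snd (blocks X Y n),
                         fst (blocks X Y n) @ snd (blocks X Y n) @ snd (blocks X Y n))"

lemma AB_blocks: "AB n = blocks cX cY n"
  by (induction n) auto

lemma blocks_goodS:
  "goodS v off X GX \<Longrightarrow> goodS v off Y GY \<Longrightarrow>
   goodS v off (fst (blocks X Y n)) (fst (blocks GX GY n)) \<and> goodS v off (snd (blocks X Y n)) (snd (blocks GX GY n))"
  by (induction n) (auto intro!: goodS_app)

lemma blocks_goodE:
  "goodE v X GX \<Longrightarrow> goodE v Y GY \<Longrightarrow>
   goodE v (fst (blocks X Y n)) (fst (blocks GX GY n)) \<and> goodE v (snd (blocks X Y n)) (snd (blocks GX GY n))"
  by (induction n) (auto intro!: goodE_app)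

lemma blocks_map: "fst (blocks (map f X) (map f Y) n) = map f (fst (blocks X Y n)) \<and>
                   snd (blocks (map f X) (map f Y) n) = map f (snd (blocks X Y n))"
  by (induction n) auto

lemma blocks_len: "Y \<noteq> [] \<Longrightarrow> length (fst (blocks X Y n)) \<ge> n \<and> snd (blocks X Y n) \<noteq> []"
proof (induction n)
  case (Suc n)
  hence l: "length (snd (blocks X Y n)) > 0" "n \<le> length (fst (blocks X Y n))" by simp_all
  have "length (fst (blocks X Y (Suc n))) = length (fst (blocks X Y n)) + length (snd (blocks X Y n))" by simp
  hence "length (fst (blocks X Y (Suc n))) \<ge> Suc n" using l by linarith
  thus ?case using Suc by simp
qed simp

lemma blocks_set: "\<forall>x\<in>set X \<union> set Y. P x \<Longrightarrow>
   (\<forall>x\<in>set (fst (blocks X Y n)). P x) \<and> (\<forall>x\<in>set (snd (blocks X Y n)). P x)"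
  by (induction n) auto

lemma mi_Suc: "morph_iter mu (Suc n) w = concat (map mu (morph_iter mu n w))"
  unfolding morph_iter_def by simp

lemma mi_0: "morph_iter mu 0 w = w"
  unfolding morph_iter_def by simp

lemma mi_add: "morph_iter mu (m + n) w = morph_iter mu m (morph_iter mu n w)"
  unfolding morph_iter_def by (simp add: funpow_add)

lemma blocks_morph:
  assumes "concat (map mu X) = X @ Y" "concat (map mu Y) = X @ Y @ Y"
  shows "fst (blocks X Y n) = morph_iter mu n X \<and> snd (blocks X Y n) = morph_iter mu n Y"
proof (induction n)
  case 0 then show ?case by (simp add: mi_0)
next
  case (Suc n)
  have "morph_iter mu (Suc n) X = morph_iter mu n (concat (map mu X))"
    using mi_add[of mu n 1 X] mi_Suc[of mu 0 X] mi_0 by simp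
  moreover have "morph_iter mu (Suc n) Y = morph_iter mu n (concat (map mu Y))"
    using mi_add[of mu n 1 Y] mi_Suc[of mu 0 Y] mi_0 by simp
  moreover have "morph_iter mu n (xs @ ys) = morph_iter mu n xs @ morph_iter mu n ys" for xs ys
    by (induction n) (simp_all add: mi_0 mi_Suc)
  ultimately show ?case using Suc assms by simp
qed

lemma mi_prefix: "\<exists>z. ys = xs @ z \<Longrightarrow> \<exists>z. morph_iter mu n ys = morph_iter mu n xs @ z"
proof (induction n)
  case 0 then show ?case by (simp add: mi_0)
next
  case (Suc n)
  then obtain z where "morph_iter mu n ys = morph_iter mu n xs @ z" by blast
  thus ?case by (simp add: mi_Suc)
qed

lemma mi_chain:
  assumes a: "mu a = a # r"
  shows "m \<le> n \<Longrightarrow> \<exists>z. morph_iter mu n [a] = morph_iter mu m [a] @ z"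
proof (induction n rule: dec_induct)
  case base then show ?case by simp
next
  case (step n)
  have "\<exists>z. morph_iter mu n (morph_iter mu 1 [a]) = morph_iter mu n [a] @ z"
    using a by (intro mi_prefix) (simp add: mi_Suc mi_0)
  hence "\<exists>z. morph_iter mu (Suc n) [a] = morph_iter mu n [a] @ z"
    using mi_add[of mu n 1 "[a]"] by simp
  thus ?case using step.IH by auto
qed

lemma fixpt_nth:
  assumes a: "mu a = a # r" and k: "k < length (morph_iter mu n [a])"
  shows "fixpt mu a k = morph_iter mu n [a] ! k"
proof -
  define n0 where "n0 = (LEAST n. k < length (morph_iter mu n [a]))"
  have n0: "k < length (morph_iter mu n0 [a])" unfolding n0_def using k by (rule LeastI)
  have "n0 \<le> n" unfolding n0_def using k by (rule Least_le)
  then obtain z where "morph_iter mu n [a] = morph_iter mu n0 [a] @ z" using mi_chain[of mu a r, OF a] by blast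
  thus ?thesis unfolding fixpt_def n0_def[symmetric] using n0 by (simp add: nth_append)
qed

lemma fixpt_prefix:
  assumes a: "mu a = a # r" and p: "\<exists>z. morph_iter mu n [a] = G @ z" and k: "k < length G"
  shows "fixpt mu a k = G ! k"
proof -
  obtain z where z: "morph_iter mu n [a] = G @ z" using p by blast
  hence "k < length (morph_iter mu n [a])" using k by simp
  hence "fixpt mu a k = morph_iter mu n [a] ! k" by (rule fixpt_nth[of mu a r, OF a])
  thus ?thesis using z k by (simp add: nth_append)
qed

lemma extractS:
  assumes g: "\<forall>n. goodS v off (W n) (G n)"
    and f: "\<forall>n i. i < length (W n) \<longrightarrow> f i = W n ! i"
    and w: "\<forall>n k. k < length (G n) \<longrightarrow> w k = G n ! k"
    and lW: "\<forall>N. \<exists>n. N < length (W n)"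
    and lG: "\<forall>k. \<exists>n. k < length (G n)"
  shows "{N. f N = v} = range (\<lambda>k. off + (\<Sum>i<k. w i))"
proof -
  have pw: "k < length (G n) \<Longrightarrow> ps (G n) k = (\<Sum>i<k. w i)" for n k
  proof -
    assume kl: "k < length (G n)"
    have "(\<Sum>i<k. G n ! i) = (\<Sum>i<k. w i)"
    proof (rule sum.cong)
      fix x assume "x \<in> {..<k}"
      hence "x < length (G n)" using kl by simp
      thus "G n ! x = w x" using w by simp
    qed simp
    thus ?thesis using ps_sum[of k "G n"] kl by simp
  qed
  have h: "\<And>n i. (i < length (W n) \<and> W n ! i = v) \<longleftrightarrow> (\<exists>k<length (G n). i = off + ps (G n) k)"
    using g goodS_def by blast
  show ?thesis
  proof (rule set_eqI, rule iffI)
    fix N assume "N \<in> {N. f N = v}"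
    hence fN: "f N = v" by simp
    obtain n where n: "N < length (W n)" using lW by blast
    hence "W n ! N = v" using f fN by simp
    then obtain k where "k < length (G n)" "N = off + ps (G n) k" using h n by blast
    thus "N \<in> range (\<lambda>k. off + (\<Sum>i<k. w i))" using pw by auto
  next
    fix N assume "N \<in> range (\<lambda>k. off + (\<Sum>i<k. w i))"
    then obtain k where k: "N = off + (\<Sum>i<k. w i)" by blast
    obtain n where n: "k < length (G n)" using lG by blast
    hence "N = off + ps (G n) k" using k pw by simp
    hence "N < length (W n) \<and> W n ! N = v" using h n by blast
    thus "N \<in> {N. f N = v}" using f by auto
  qed
qed

lemma extractE:
  assumes g: "\<forall>n. goodE v (W n) (G n)"
    and f: "\<forall>n i. i < length (W n) \<longrightarrow> f i = W n ! i"
    and w: "\<forall>n k. k < length (G n) \<longrightarrow> w k = G n ! k"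
    and lW: "\<forall>N. \<exists>n. N < length (W n)"
    and lG: "\<forall>k. \<exists>n. k < length (G n)"
  shows "{N. f N = v} = range (\<lambda>k. (\<Sum>i<Suc k. w i) - 1)"
proof -
  have pw: "k < length (G n) \<Longrightarrow> ps (G n) (Suc k) = (\<Sum>i<Suc k. w i)" for n k
  proof -
    assume kl: "k < length (G n)"
    have "(\<Sum>i<Suc k. G n ! i) = (\<Sum>i<Suc k. w i)"
    proof (rule sum.cong)
      fix x assume "x \<in> {..<Suc k}"
      hence "x < length (G n)" using kl by simp
      thus "G n ! x = w x" using w by simp
    qed simp
    thus ?thesis using ps_sum[of "Suc k" "G n"] kl by (simp del: sum.lessThan_Suc)
  qed
  have pos: "k < length (G n) \<Longrightarrow> ps (G n) (Suc k) > 0" for n k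
    using ps_Suc_pos g goodE_def by blast
  have h: "\<And>n i. (i < length (W n) \<and> W n ! i = v) \<longleftrightarrow> (\<exists>k<length (G n). i + 1 = ps (G n) (Suc k))"
    using g goodE_def by blast
  show ?thesis
  proof (rule set_eqI, rule iffI)
    fix N assume "N \<in> {N. f N = v}"
    hence fN: "f N = v" by simp
    obtain n where n: "N < length (W n)" using lW by blast
    hence "W n ! N = v" using f fN by simp
    then obtain k where "k < length (G n)" "N + 1 = ps (G n) (Suc k)" using h n by blast
    hence "N = (\<Sum>i<Suc k. w i) - 1" using pw by fastforce
    thus "N \<in> range (\<lambda>k. (\<Sum>i<Suc k. w i) - 1)" by blast
  next
    fix N assume "N \<in> range (\<lambda>k. (\<Sum>i<Suc k. w i) - 1)"
    then obtain k where k: "N = (\<Sum>i<Suc k. w i) - 1" by blast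
    obtain n where n: "k < length (G n)" using lG by blast
    hence "N + 1 = ps (G n) (Suc k)" using k pw pos by fastforce
    hence "N < length (W n) \<and> W n ! N = v" using h n by blast
    thus "N \<in> {N. f N = v}" using f by auto
  qed
qed

lemma strict_mono_same_range:
  fixes f g :: "nat \<Rightarrow> nat"
  assumes f: "strict_mono f" and g: "strict_mono g" and r: "range f = range g"
  shows "f = g"
proof
  fix n show "f n = g n"
  proof (induction n rule: less_induct)
    case (less n)
    obtain m where m: "f n = g m" using r by (metis rangeI image_iff)
    obtain m' where m': "g n = f m'" using r by (metis rangeI image_iff)
    have "\<not> m < n"
    proof
      assume "m < n"
      hence "g m = f m" using less by simp
      hence "f n = f m" using m by simp
      thus False using \<open>m < n\<close> f by (simp add: strict_mono_eq)
    qed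
    hence "g n \<le> g m" using g by (simp add: strict_mono_less_eq)
    have "\<not> m' < n"
    proof
      assume "m' < n"
      hence "f m' = g m'" using less by simp
      hence "g n = g m'" using m' by simp
      thus False using \<open>m' < n\<close> g by (simp add: strict_mono_eq)
    qed
    hence "f n \<le> f m'" using f by (simp add: strict_mono_less_eq)
    show "f n = g n" using \<open>g n \<le> g m\<close> \<open>f n \<le> f m'\<close> m m' by simp
  qed
qed

lemma enum_eq:
  fixes P :: "nat \<Rightarrow> nat"
  assumes sm: "strict_mono P" and r: "range P = S"
  shows "enumerate S = P" and "infinite S"
proof -
  show inf: "infinite S" using r range_inj_infinite strict_mono_imp_inj_on[OF sm] by blast
  show "enumerate S = P"
    using strict_mono_same_range[OF strict_mono_enumerate[OF inf] sm] range_enumerate[OF inf] r by simp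
qed



lemma goodS_check:
  assumes "sum_list G = length W" "filter (\<lambda>i. W!i = v) [0..<length W] = map (\<lambda>k. off + ps G k) [0..<length G]"
  shows "goodS v off W G"
proof -
  have "(i < length W \<and> W!i = v) \<longleftrightarrow> i \<in> set (filter (\<lambda>i. W!i = v) [0..<length W])" for i by auto
  moreover have "i \<in> set (map (\<lambda>k. off + ps G k) [0..<length G]) \<longleftrightarrow> (\<exists>k<length G. i = off + ps G k)" for i
    by auto
  ultimately show ?thesis unfolding goodS_def using assms by simp
qed

lemma goodE_check:
  assumes "sum_list G = length W" "\<forall>x\<in>set G. 0 < x"
    "filter (\<lambda>i. W!i = v) [0..<length W] = map (\<lambda>k. ps G (Suc k) - 1) [0..<length G]"
  shows "goodE v W G"
proof -
  have "(i < length W \<and> W!i = v) \<longleftrightarrow> i \<in> set (filter (\<lambda>i. W!i = v) [0..<length W])" for i by auto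
  moreover have "i \<in> set (map (\<lambda>k. ps G (Suc k) - 1) [0..<length G]) \<longleftrightarrow> (\<exists>k<length G. i + 1 = ps G (Suc k))" for i
  proof
    assume "i \<in> set (map (\<lambda>k. ps G (Suc k) - 1) [0..<length G])"
    then obtain k where k: "k < length G" "i = ps G (Suc k) - 1" by auto
    moreover have "ps G (Suc k) > 0" using ps_Suc_pos assms(2) k(1) by blast
    ultimately show "\<exists>k<length G. i + 1 = ps G (Suc k)" by (intro exI[of _ k]) auto
  next
    assume "\<exists>k<length G. i + 1 = ps G (Suc k)"
    then obtain k where "k < length G" "i + 1 = ps G (Suc k)" by blast
    thus "i \<in> set (map (\<lambda>k. ps G (Suc k) - 1) [0..<length G])" by force
  qed
  ultimately show ?thesis unfolding goodE_def using assms by simp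
qed

lemma gI_X: "goodS 1 0 cX [1,2,4]"
  by (rule goodS_check) (simp_all add: cX_def ps_def upt_rec)
lemma gI_Y: "goodS 1 0 cY [1,2,4,4]"
  by (rule goodS_check) (simp_all add: cY_def ps_def upt_rec)
lemma gC_X: "goodS 0 2 cX [2,1,4]"
  by (rule goodS_check) (simp_all add: cX_def ps_def upt_rec)
lemma gC_Y: "goodS 0 2 cY [3,1,3,4]"
  by (rule goodS_check) (simp_all add: cY_def ps_def upt_rec)
lemma gD_X: "goodE (-1) cX [7]"
  by (rule goodE_check) (simp_all add: cX_def ps_def upt_rec)
lemma gD_Y: "goodE (-1) cY [5,4,2]"
  by (rule goodE_check) (simp_all add: cY_def ps_def upt_rec)

lemma fW: "\<forall>n i. i < length (AA n) \<longrightarrow> sig i = AA n ! i"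
  using sig_AA AB_len by simp

lemma lW: "\<forall>N. \<exists>n. N < length (AA n)"
proof
  fix N show "\<exists>n. N < length (AA n)"
    using AB_len[of N] luc_ge[of "2*N+4"] by (intro exI[of _ N]) simp
qed

lemma finalS:
  assumes g: "\<forall>n. goodS v off (AA n) (G n)" and w: "\<forall>n k. k < length (G n) \<longrightarrow> w k = G n ! k"
    and lG: "\<forall>k. \<exists>n. k < length (G n)" and pos: "\<forall>k. w k > 0" and S: "S = {N. sig N = v}"
  shows "infinite S \<and> (\<forall>k. enumerate S k = off + (\<Sum>i<k. w i))"
proof -
  have r: "S = range (\<lambda>k. off + (\<Sum>i<k. w i))"
    unfolding S by (rule extractS[OF g fW w lW lG])
  have sm: "strict_mono (\<lambda>k. off + (\<Sum>i<k. w i))"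
    unfolding strict_mono_Suc_iff using pos by simp
  show ?thesis using enum_eq[OF sm r[symmetric]] by simp
qed

lemma finalE:
  assumes g: "\<forall>n. goodE v (AA n) (G n)" and w: "\<forall>n k. k < length (G n) \<longrightarrow> w k = G n ! k"
    and lG: "\<forall>k. \<exists>n. k < length (G n)" and pos: "\<forall>k. w k > 0" and S: "S = {N. sig N = v}"
  shows "infinite S \<and> (\<forall>k. enumerate S k = (\<Sum>i<Suc k. w i) - 1)"
proof -
  have r: "S = range (\<lambda>k. (\<Sum>i<Suc k. w i) - 1)"
    unfolding S by (rule extractE[OF g fW w lW lG])
  have sm: "strict_mono (\<lambda>k. (\<Sum>i<Suc k. w i) - 1)"
  proof (unfold strict_mono_Suc_iff, intro allI)
    fix k
    have "(\<Sum>i<Suc k. w i) \<ge> w 0" by (rule member_le_sum) auto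
    thus "(\<Sum>i<Suc k. w i) - 1 < (\<Sum>i<Suc (Suc k). w i) - 1" using pos[rule_format, of 0] pos[rule_format, of "Suc k"] by simp
  qed
  show ?thesis using enum_eq[OF sm r[symmetric]] by simp
qed

lemma pos_from_blocks:
  assumes w: "\<forall>n k. k < length (fst (blocks X Y n)) \<longrightarrow> w k = fst (blocks X Y n) ! k"
    and lG: "\<forall>k. \<exists>n. k < length (fst (blocks X Y n))" and p: "\<forall>x\<in>set X \<union> set Y. 0 < x"
  shows "\<forall>k. w k > (0::nat)"
proof
  fix k obtain n where n: "k < length (fst (blocks X Y n))" using lG by blast
  hence "fst (blocks X Y n) ! k \<in> set (fst (blocks X Y n))" by simp
  thus "w k > 0" using blocks_set[OF p, of n] w n by simp
qed

lemma lG_blocks: "Y \<noteq> [] \<Longrightarrow> \<forall>k. \<exists>n. k < length (fst (blocks X Y n))"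
proof
  fix k assume "Y \<noteq> []"
  thus "\<exists>n. k < length (fst (blocks X Y n))" using blocks_len[where Y=Y and X=X and n="Suc k"] by (intro exI[of _ "Suc k"]) simp
qed

lemma incr_eq: "incr_pts = {N. sig N = 1}"
  unfolding incr_pts_def sig_def dd_def by (auto simp: sgn_if)
lemma const_eq: "const_pts = {N. sig N = 0}"
  unfolding const_pts_def sig_def dd_def by (auto simp: sgn_if)
lemma decr_eq: "decr_pts = {N. sig N = -1}"
  unfolding decr_pts_def sig_def dd_def by (auto simp: sgn_if)

lemma partI: "infinite incr_pts \<and> (\<forall>k. enumerate incr_pts k = (\<Sum>i<k. fixpt mu_I 1 i))"
proof -
  define G where "G n = fst (blocks [1,2,4] [1,2,4,4::nat] n)" for n
  have g: "\<forall>n. goodS 1 0 (AA n) (G n)"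
    unfolding G_def AB_blocks using blocks_goodS[OF gI_X gI_Y] by blast
  have m: "G n = morph_iter mu_I n [1,2,4]" for n
    unfolding G_def using blocks_morph[of mu_I "[1,2,4]" "[1,2,4,4]" n] by (simp add: mu_I_def)
  have m2: "morph_iter mu_I 2 [1] = [1,2,4]" by (simp add: numeral_2_eq_2 mi_Suc mi_0 mu_I_def)
  have w: "\<forall>n k. k < length (G n) \<longrightarrow> fixpt mu_I 1 k = G n ! k"
  proof (intro allI impI)
    fix n k assume k: "k < length (G n)"
    have "morph_iter mu_I (n+2) [1] = G n @ []" using m mi_add[of mu_I n 2 "[1]"] m2 by simp
    thus "fixpt mu_I 1 k = G n ! k" using fixpt_prefix[of mu_I 1 "[2]" "n+2" "G n" k] k
      by (simp add: mu_I_def)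
  qed
  have lG: "\<forall>k. \<exists>n. k < length (G n)" unfolding G_def by (rule lG_blocks) simp
  have pos: "\<forall>k. fixpt mu_I 1 k > 0"
    using pos_from_blocks[where w="fixpt mu_I 1" and X="[1,2,4]" and Y="[1,2,4,4]"] w lG unfolding G_def by simp
  show ?thesis using finalS[OF g w lG pos incr_eq] by simp
qed

lemma partC: "infinite const_pts \<and> (\<forall>k. enumerate const_pts k = 2 + (\<Sum>i<k. proj_C (fixpt mu_C 2 i)))"
proof -
  define H where "H n = fst (blocks [2,1,4] [3,1,5,4::nat] n)" for n
  define G where "G n = fst (blocks [2,1,4] [3,1,3,4::nat] n)" for n
  have GH: "G n = map proj_C (H n)" for n
    unfolding G_def H_def using blocks_map[of proj_C "[2,1,4]" "[3,1,5,4]" n] by (simp add: proj_C_def)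
  have g: "\<forall>n. goodS 0 2 (AA n) (G n)"
    unfolding G_def AB_blocks using blocks_goodS[OF gC_X gC_Y] by blast
  have m: "H n = morph_iter mu_C n [2,1,4]" for n
    unfolding H_def using blocks_morph[of mu_C "[2,1,4]" "[3,1,5,4]" n] by (simp add: mu_C_def)
  have m2: "morph_iter mu_C 2 [2] = [2,1,4] @ [3]" by (simp add: numeral_2_eq_2 mi_Suc mi_0 mu_C_def)
  have w: "\<forall>n k. k < length (G n) \<longrightarrow> proj_C (fixpt mu_C 2 k) = G n ! k"
  proof (intro allI impI)
    fix n k assume k: "k < length (G n)"
    have "\<exists>z. morph_iter mu_C n ([2,1,4] @ [3]) = morph_iter mu_C n [2,1,4] @ z" by (rule mi_prefix) blast
    hence "\<exists>z. morph_iter mu_C (n+2) [2] = H n @ z" using m mi_add[of mu_C n 2 "[2]"] m2 by simp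
    moreover have "k < length (H n)" using k GH by simp
    ultimately have "fixpt mu_C 2 k = H n ! k" using fixpt_prefix[of mu_C 2 "[1]" "n+2" "H n" k]
      by (simp add: mu_C_def)
    thus "proj_C (fixpt mu_C 2 k) = G n ! k" using GH \<open>k < length (H n)\<close> by simp
  qed
  have lG: "\<forall>k. \<exists>n. k < length (G n)" unfolding G_def by (rule lG_blocks) simp
  have pos: "\<forall>k. proj_C (fixpt mu_C 2 k) > 0"
    using pos_from_blocks[where w="\<lambda>k. proj_C (fixpt mu_C 2 k)" and X="[2,1,4]" and Y="[3,1,3,4]"] w lG unfolding G_def by simp
  show ?thesis using finalS[OF g w lG pos const_eq] by simp
qed

lemma partD: "infinite decr_pts \<and> (\<forall>k. enumerate decr_pts k = (\<Sum>i<Suc k. fixpt mu_D 7 i) - 1)"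
proof -
  define G where "G n = fst (blocks [7] [5,4,2::nat] n)" for n
  have g: "\<forall>n. goodE (-1) (AA n) (G n)"
    unfolding G_def AB_blocks using blocks_goodE[OF gD_X gD_Y] by blast
  have m: "G n = morph_iter mu_D n [7]" for n
    unfolding G_def using blocks_morph[of mu_D "[7]" "[5,4,2]" n] by (simp add: mu_D_def)
  have w: "\<forall>n k. k < length (G n) \<longrightarrow> fixpt mu_D 7 k = G n ! k"
  proof (intro allI impI)
    fix n k assume k: "k < length (G n)"
    have "morph_iter mu_D n [7] = G n @ []" using m by simp
    thus "fixpt mu_D 7 k = G n ! k" using fixpt_prefix[of mu_D 7 "[5,4,2]" n "G n" k] k
      by (simp add: mu_D_def)
  qed
  have lG: "\<forall>k. \<exists>n. k < length (G n)" unfolding G_def by (rule lG_blocks) simp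
  have pos: "\<forall>k. fixpt mu_D 7 k > 0"
    using pos_from_blocks[where w="fixpt mu_D 7" and X="[7]" and Y="[5,4,2]"] w lG unfolding G_def by simp
  show ?thesis using finalE[OF g w lG pos decr_eq] by simp
qed

lemma fixD0: "fixpt mu_D 7 0 = 7"
  using fixpt_nth[of mu_D 7 "[5,4,2]" 0 0] by (simp add: mu_D_def mi_0)

theorem theorem7:
  shows "(infinite incr_pts \<and> I_beta 1 = 0 \<and>
           (\<forall>k. int (I_beta (k + 2)) - int (I_beta (k + 1)) = int (fixpt mu_I 1 k)))
       \<and> (infinite const_pts \<and> C_beta 1 = 2 \<and>
           (\<forall>k. int (C_beta (k + 2)) - int (C_beta (k + 1)) = int (proj_C (fixpt mu_C 2 k))))
       \<and> (infinite decr_pts \<and> D_beta 1 = 6 \<and>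
           (\<forall>k. int (D_beta (k + 2)) - int (D_beta (k + 1)) = int (fixpt mu_D 7 (k + 1))))"
proof -
  have I: "infinite incr_pts \<and> I_beta 1 = 0 \<and>
           (\<forall>k. int (I_beta (k + 2)) - int (I_beta (k + 1)) = int (fixpt mu_I 1 k))"
    using partI unfolding I_beta_def by simp
  have C: "infinite const_pts \<and> C_beta 1 = 2 \<and>
           (\<forall>k. int (C_beta (k + 2)) - int (C_beta (k + 1)) = int (proj_C (fixpt mu_C 2 k)))"
    using partC unfolding C_beta_def by simp
  have posD: "\<forall>k. fixpt mu_D 7 k > 0"
  proof
    fix k
    define G where "G n = fst (blocks [7] [5,4,2::nat] n)" for n
    have lG: "\<forall>k. \<exists>n. k < length (G n)" unfolding G_def by (rule lG_blocks) simp
    then obtain n where n: "k < length (G n)" by blast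
    have m: "G n = morph_iter mu_D n [7]"
      unfolding G_def using blocks_morph[of mu_D "[7]" "[5,4,2]" n] by (simp add: mu_D_def)
    hence "fixpt mu_D 7 k = G n ! k" using fixpt_prefix[of mu_D 7 "[5,4,2]" n "G n" k] n
      by (simp add: mu_D_def)
    moreover have "G n ! k \<in> set (G n)" using n by simp
    ultimately show "fixpt mu_D 7 k > 0" using blocks_set[of "[7]" "[5,4,2::nat]" "\<lambda>x. 0 < x" n] unfolding G_def by auto
  qed
  have D: "infinite decr_pts \<and> D_beta 1 = 6 \<and>
           (\<forall>k. int (D_beta (k + 2)) - int (D_beta (k + 1)) = int (fixpt mu_D 7 (k + 1)))"
  proof -
    have e: "\<forall>k. D_beta (k+1) = (\<Sum>i<Suc k. fixpt mu_D 7 i) - 1" using partD unfolding D_beta_def by simp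
    have d1: "D_beta 1 = 6" using e[rule_format, of 0] fixD0 by simp
    have "int (D_beta (k + 2)) - int (D_beta (k + 1)) = int (fixpt mu_D 7 (k + 1))" for k
    proof -
      have "(\<Sum>i<Suc k. fixpt mu_D 7 i) \<ge> fixpt mu_D 7 0" by (rule member_le_sum) auto
      hence ge: "(\<Sum>i<Suc k. fixpt mu_D 7 i) \<ge> 1" using posD by (metis less_one not_le order.trans)
      have "D_beta (k+2) = (\<Sum>i<Suc k. fixpt mu_D 7 i) + fixpt mu_D 7 (Suc k) - 1"
        using e[rule_format, of "Suc k"] by simp
      thus ?thesis using e[rule_format, of k] ge by simp
    qed
    thus ?thesis using partD d1 by simp
  qed
  show ?thesis using I C D by blast
qed


end
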